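(* Let $M=(m_i)$, $N=(n_i)$ satisfy conditions (i) and (ii) below and let $p_k=5n_1+\sum_{1\le i<k}s_in_{2i}$ for $k\ge1$. Let $k\ge1$, $a\in\mathbb N\cup\{0\}$ and let $a_1,\dots,a_{k-1}$ be non-negative integers such that $m_1^{a}\prod_{1\le i<k}m_{2i}^{a_i}<m_{2k}$. Then $an_1+\sum_{1\le i<k}a_in_{2i}<p_k$.
   Context: $M=(m_i)$, $N=(n_i)$ are increasing sequences of positive integers such that (i) $m_1>3$, $m_2=m_1^5$, $m_{2j+1}=m_{2j}^5$ for $j\ge1$, and there is an increasing sequence $(s_i)$ of positive integers with $m_{2j}=\prod_{i=1}^{j-1}m_{2i}^{s_i}$ for $j\ge2$; (ii) defining for $j\ge2$ $f_j=\max\{\rho n_1+\sum_{1\le i<j}\rho_in_{2i}:\ \rho,\rho_i\in\mathbb N\cup\{0\},\ m_1^{\rho}\prod_{1\le i<j}m_{2i}^{\rho_i}<m_{2j}\}$, one has $4f_j<n_{2j}$ for all $j\ge2$, and $5n_1<n_2$. *)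

theory Defs
  imports Main
begin

text \<open>Sequences are indexed from 1; values at index 0 are irrelevant.
  f_j: maximum of rho*n_1 + sum_{1<=i<j} rho_i * n_{2i} over all non-negative
  integers rho, rho_i with m_1^rho * prod_{1<=i<j} m_{2i}^rho_i < m_{2j}.\<close>

definition fseq :: "(nat \<Rightarrow> nat) \<Rightarrow> (nat \<Rightarrow> nat) \<Rightarrow> nat \<Rightarrow> nat" where
  "fseq m n j = Max {\<rho> * n 1 + (\<Sum>i\<in>{1..<j}. r i * n (2*i)) | \<rho> r.
       m 1 ^ \<rho> * (\<Prod>i\<in>{1..<j}. m (2*i) ^ r i) < m (2*j)}"

definition pseq :: "(nat \<Rightarrow> nat) \<Rightarrow> (nat \<Rightarrow> nat) \<Rightarrow> nat \<Rightarrow> nat" where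
  "pseq n s k = 5 * n 1 + (\<Sum>i\<in>{1..<k}. s i * n (2*i))"

end

theory Submission
  imports Defs
begin

lemma fseq_ge:
  fixes m n r :: "nat \<Rightarrow> nat"
  assumes m2: "\<forall>i\<ge>1. m i \<ge> 2"
    and cond: "m 1 ^ \<rho> * (\<Prod>i\<in>{1..<j}. m (2*i) ^ r i) < m (2*j)"
  shows "\<rho> * n 1 + (\<Sum>i\<in>{1..<j}. r i * n (2*i)) \<le> fseq m n j"
proof -
  let ?S = "{\<rho> * n 1 + (\<Sum>i\<in>{1..<j}. r i * n (2*i)) | \<rho> r.
       m 1 ^ \<rho> * (\<Prod>i\<in>{1..<j}. m (2*i) ^ r i) < m (2*j)}"
  let ?B = "m (2*j) * n 1 + (\<Sum>i\<in>{1..<j}. m (2*j) * n (2*i))"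
  have bnd: "x \<le> ?B" if "x \<in> ?S" for x
  proof -
    from that obtain \<rho>' r' where x: "x = \<rho>' * n 1 + (\<Sum>i\<in>{1..<j}. r' i * n (2*i))"
      and c: "m 1 ^ \<rho>' * (\<Prod>i\<in>{1..<j}. m (2*i) ^ r' i) < m (2*j)" by blast
    have m2': "m (2*i) \<ge> 2" if "i \<ge> 1" for i using m2 that by simp
    have P: "0 < (\<Prod>i\<in>{1..<j}. m (2*i) ^ r' i)"
      using m2' by (intro prod_pos) (metis atLeastLessThan_iff le_trans one_le_numeral zero_less_power le_less_trans zero_less_Suc less_le_trans numeral_2_eq_2)
    have m1: "m 1 \<ge> 2" using m2 by auto
    have "\<rho>' < 2 ^ \<rho>'" by (rule less_exp)
    also have "\<dots> \<le> m 1 ^ \<rho>'" using m1 by (simp add: power_mono)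
    also have "\<dots> \<le> m 1 ^ \<rho>' * (\<Prod>i\<in>{1..<j}. m (2*i) ^ r' i)" using P
      by (metis One_nat_def Suc_leI mult.right_neutral mult_le_mono2)
    finally have h1: "\<rho>' < m (2*j)" using c by linarith
    have h2: "r' i < m (2*j)" if i: "i \<in> {1..<j}" for i
    proof -
      have mi: "m (2*i) \<ge> 2" using m2 i by auto
      have "r' i < 2 ^ r' i" by (rule less_exp)
      also have "\<dots> \<le> m (2*i) ^ r' i" using mi by (simp add: power_mono)
      also have "\<dots> \<le> (\<Prod>i\<in>{1..<j}. m (2*i) ^ r' i)"
        using P i by (intro dvd_imp_le) (auto intro: dvd_prodI)
      also have "\<dots> \<le> m 1 ^ \<rho>' * (\<Prod>i\<in>{1..<j}. m (2*i) ^ r' i)"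
      proof -
        have "0 < m 1 ^ \<rho>'" using m1 by simp
        then show ?thesis by (metis One_nat_def Suc_leI mult.left_neutral mult_le_mono1)
      qed
      finally show ?thesis using c by linarith
    qed
    have "\<rho>' * n 1 \<le> m (2*j) * n 1" using h1 by simp
    moreover have "(\<Sum>i\<in>{1..<j}. r' i * n (2*i)) \<le> (\<Sum>i\<in>{1..<j}. m (2*j) * n (2*i))"
      using h2 by (intro sum_mono) (simp add: less_imp_le)
    ultimately show ?thesis using x by linarith
  qed
  have fin: "finite ?S" by (rule finite_subset[of _ "{..?B}"]) (use bnd in auto)
  have "\<rho> * n 1 + (\<Sum>i\<in>{1..<j}. r i * n (2*i)) \<in> ?S" using cond by blast
  then show ?thesis unfolding fseq_def using fin by (intro Max_ge) auto
qed

lemma m_ge1: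
  fixes m :: "nat \<Rightarrow> nat"
  assumes m_inc: "\<forall>i\<ge>1. m i < m (Suc i)"
  shows "i \<ge> 1 \<Longrightarrow> m 1 \<le> m i"
proof (induction i rule: nat_induct_at_least)
  case base then show ?case by simp
next
  case (Suc i) then show ?case using m_inc by (metis le_trans less_imp_le)
qed

theorem mainTheorem6:
  fixes m n s :: "nat \<Rightarrow> nat" and k a :: nat and av :: "nat \<Rightarrow> nat"
  assumes m_pos: "\<forall>i\<ge>1. 0 < m i" and m_inc: "\<forall>i\<ge>1. m i < m (Suc i)"
    and n_pos: "\<forall>i\<ge>1. 0 < n i" and n_inc: "\<forall>i\<ge>1. n i < n (Suc i)"
    and s_pos: "\<forall>i\<ge>1. 0 < s i" and s_inc: "\<forall>i\<ge>1. s i < s (Suc i)"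
    and m1: "m 1 > 3" and m2: "m 2 = m 1 ^ 5"
    and m_odd: "\<forall>j\<ge>1. m (2*j+1) = m (2*j) ^ 5"
    and m_even: "\<forall>j\<ge>2. m (2*j) = (\<Prod>i\<in>{1..<j}. m (2*i) ^ s i)"
    and f_cond: "\<forall>j\<ge>2. 4 * fseq m n j < n (2*j)"
    and n12: "5 * n 1 < n 2"
    and k: "k \<ge> 1"
    and small: "m 1 ^ a * (\<Prod>i\<in>{1..<k}. m (2*i) ^ av i) < m (2*k)"
  shows "a * n 1 + (\<Sum>i\<in>{1..<k}. av i * n (2*i)) < pseq n s k"
proof -
  have mge2: "\<forall>i\<ge>1. m i \<ge> 2"
  proof (intro allI impI)
    fix i :: nat assume "i \<ge> 1"
    then have "m 1 \<le> m i" by (rule m_ge1[OF m_inc])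
    then show "m i \<ge> 2" using m1 by linarith
  qed
  have key: "\<forall>r a av. r \<ge> 1 \<longrightarrow> m 1 ^ a * (\<Prod>i\<in>{1..<k}. m (2*i) ^ av i) < m (2*k) ^ r
     \<longrightarrow> a * n 1 + (\<Sum>i\<in>{1..<k}. av i * n (2*i)) + n (2*k) < pseq n s k + r * n (2*k)"
    using k
  proof (induction k rule: nat_induct_at_least)
    case base
    show ?case
    proof (intro allI impI)
      fix r a and av :: "nat \<Rightarrow> nat"
      assume r: "r \<ge> 1" and c: "m 1 ^ a * (\<Prod>i\<in>{1..<1}. m (2*i) ^ av i) < m (2*1) ^ r"
      have "m 1 ^ a < m 1 ^ (5*r)" using c m2 by (simp add: power_mult)
      then have ar: "a < 5*r" using m1 by (simp add: power_strict_increasing_iff)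
      obtain r' where r': "r = 1 + r'" using r by (metis le_add_diff_inverse)
      have h1: "a * n 1 \<le> (4 + 5*r') * n 1" using ar r' by simp
      have h2: "5*r'*n 1 \<le> r' * n 2" using n12
        by (metis less_imp_le mult.assoc mult.commute mult_le_mono2)
      have n1: "n 1 > 0" using n_pos by simp
      show "a * n 1 + (\<Sum>i\<in>{1..<1}. av i * n (2*i)) + n (2*1) < pseq n s 1 + r * n (2*1)"
      proof -
        have h1': "a * n 1 \<le> 4 * n 1 + 5*r'*n 1" using h1 by (simp add: algebra_simps)
        have h3: "r * n 2 = n 2 + r' * n 2" using r' by simp
        have "a * n 1 + n 2 < 5 * n 1 + r * n 2" using h1' h2 h3 n1 by linarith
        then show ?thesis unfolding pseq_def by simp
      qed
    qed
  next
    case (Suc k)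
    define c where "c = (if k = 1 then s 1 else s k + 1)"
    have mk2: "m (2*k) \<ge> 2" using mge2 Suc.hyps by simp
    have mS: "m (2 * Suc k) = m (2*k) ^ c"
    proof -
      have "m (2 * Suc k) = (\<Prod>i\<in>{1..<Suc k}. m (2*i) ^ s i)"
        using Suc.hyps by (intro m_even[rule_format]) simp
      also have "\<dots> = (\<Prod>i\<in>{1..<k}. m (2*i) ^ s i) * m (2*k) ^ s k"
        using Suc.hyps by (simp add: prod.atLeastLessThan_Suc)
      also have "\<dots> = m (2*k) ^ c"
      proof (cases "k = 1")
        case True then show ?thesis by (simp add: c_def)
      next
        case False
        then have "(\<Prod>i\<in>{1..<k}. m (2*i) ^ s i) = m (2*k)" using Suc.hyps False
          by (intro m_even[rule_format, symmetric]) simp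
        then show ?thesis using False by (simp add: c_def)
      qed
      finally show ?thesis .
    qed
    have c1: "c \<ge> 1" using s_pos Suc.hyps by (simp add: c_def Suc_leI)
    have cs: "c \<le> s k + 1" by (simp add: c_def)
    have fS: "4 * fseq m n (Suc k) < n (2 * Suc k)" using Suc.hyps by (intro f_cond[rule_format]) simp
    have mlt: "m (2*k) < m (2 * Suc k)"
    proof -
      have "m (2*k) < m (Suc (2*k))" using m_inc Suc.hyps by simp
      also have "\<dots> < m (Suc (Suc (2*k)))" using m_inc by simp
      finally show ?thesis by simp
    qed
    have sum1: "(\<Sum>i\<in>{1..<Suc k}. (if i = k then x else 0) * n (2*i)) = x * n (2*k)" for x
      using Suc.hyps by (simp add: sum.atLeastLessThan_Suc)
    have prod1: "(\<Prod>i\<in>{1..<Suc k}. m (2*i) ^ (if i = k then x else 0)) = m (2*k) ^ x" for x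
      using Suc.hyps by (simp add: prod.atLeastLessThan_Suc)
    have fa: "(c - 1) * n (2*k) \<le> fseq m n (Suc k)"
    proof -
      have "m (2*k) ^ (c-1) < m (2*k) ^ c" using mk2 c1 by (simp add: power_strict_increasing_iff)
      then have "m 1 ^ 0 * (\<Prod>i\<in>{1..<Suc k}. m (2*i) ^ (if i = k then c - 1 else 0)) < m (2 * Suc k)"
        using mS prod1 by simp
      from fseq_ge[OF mge2 this, of n] show ?thesis unfolding sum1 by simp
    qed
    have fb: "n (2*k) \<le> fseq m n (Suc k)"
    proof -
      have "m 1 ^ 0 * (\<Prod>i\<in>{1..<Suc k}. m (2*i) ^ (if i = k then 1 else 0)) < m (2 * Suc k)"
        using mlt prod1[of 1] by simp
      from fseq_ge[OF mge2 this, of n] show ?thesis unfolding sum1 by simp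
    qed
    have cn: "c * n (2*k) \<le> n (2 * Suc k)"
    proof -
      have "c * n (2*k) = (c - 1) * n (2*k) + n (2*k)" using c1
        by (metis add.commute le_add_diff_inverse mult_Suc plus_1_eq_Suc)
      then show ?thesis using fa fb fS by linarith
    qed
    show ?case
    proof (intro allI impI)
      fix r a and av :: "nat \<Rightarrow> nat"
      assume r: "r \<ge> 1" and c: "m 1 ^ a * (\<Prod>i\<in>{1..<Suc k}. m (2*i) ^ av i) < m (2 * Suc k) ^ r"
      define P where "P = m 1 ^ a * (\<Prod>i\<in>{1..<k}. m (2*i) ^ av i)"
      define t where "t = av k"
      have pp: "0 < m (2*i) ^ av i" if "i \<in> {1..<k}" for i
      proof -
        have "m (2*i) \<ge> 2" using mge2 that by simp
        then show ?thesis by simp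
      qed
      have Ppos: "P > 0" unfolding P_def using m1
        by (intro mult_pos_pos prod_pos pp) auto
      have c2: "P * m (2*k) ^ t < m (2*k) ^ (c*r)"
        using c Suc.hyps mS unfolding P_def t_def
        by (simp add: prod.atLeastLessThan_Suc power_mult mult.assoc)
      have "m (2*k) ^ t \<le> P * m (2*k) ^ t" using Ppos by simp
      then have "m (2*k) ^ t < m (2*k) ^ (c*r)" using c2 by linarith
      then have tlt: "t < c*r" using mk2 by (simp add: power_strict_increasing_iff)
      have "P * m (2*k) ^ t < m (2*k) ^ (c*r - t) * m (2*k) ^ t"
        using c2 tlt by (simp add: power_add[symmetric])
      then have Plt: "P < m (2*k) ^ (c*r - t)" by simp
      have ih: "a * n 1 + (\<Sum>i\<in>{1..<k}. av i * n (2*i)) + n (2*k) < pseq n s k + (c*r - t) * n (2*k)"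
        using Suc.IH Plt tlt unfolding P_def by simp
      obtain r' where r': "r = 1 + r'" using r by (metis le_add_diff_inverse)
      have e1: "(c*r - t) * n (2*k) + t * n (2*k) = c * n (2*k) + c * r' * n (2*k)"
      proof -
        have "(c*r - t) * n (2*k) + t * n (2*k) = (c*r - t + t) * n (2*k)" by (simp add: add_mult_distrib)
        also have "c*r - t + t = c*r" using tlt by simp
        finally show ?thesis using r' by (simp add: algebra_simps)
      qed
      have e2: "c * r' * n (2*k) \<le> r' * n (2 * Suc k)" using cn
        by (metis mult.assoc mult.commute mult_le_mono2)
      have e3: "c * n (2*k) \<le> s k * n (2*k) + n (2*k)" using cs
        by (metis add_mult_distrib mult_1 mult_le_mono1)
      have ps: "pseq n s (Suc k) = pseq n s k + s k * n (2*k)"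
        unfolding pseq_def using Suc.hyps by (simp add: sum.atLeastLessThan_Suc)
      have ss: "(\<Sum>i\<in>{1..<Suc k}. av i * n (2*i)) = (\<Sum>i\<in>{1..<k}. av i * n (2*i)) + t * n (2*k)"
        using Suc.hyps unfolding t_def by (simp add: sum.atLeastLessThan_Suc)
      show "a * n 1 + (\<Sum>i\<in>{1..<Suc k}. av i * n (2*i)) + n (2 * Suc k) < pseq n s (Suc k) + r * n (2 * Suc k)"
      proof -
        have h: "(1+r')*n(2*Suc k) = n(2*Suc k) + r'*n(2*Suc k)" by simp
        show ?thesis unfolding ss ps r' using ih e1 e2 e3 h by linarith
      qed
    qed
  qed
  have "a * n 1 + (\<Sum>i\<in>{1..<k}. av i * n (2*i)) + n (2*k) < pseq n s k + 1 * n (2*k)"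
    using key[rule_format, of 1 a av] small by simp
  then show ?thesis by simp
qed

end
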